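(* Let $\{\omega_n\}_{n\ge0}$ be a sequence in $\mathbb{T}$ with the repetition property. Then for every $\alpha\in\mathbb{T}$, the sequences $\{\omega_n\}_{n\ge0}$ and $\{\alpha n\}_{n\ge0}$ have the joint repetition property. Consequently, for every $\alpha,\beta\in\mathbb{T}$, the sequences $\{\omega_n\}_{n\ge0}$ and $\{\omega_n+\alpha n+\beta\}_{n\ge0}$ have the joint repetition property.
   Context: $\mathbb{T}=\mathbb{R}/\mathbb{Z}$ with metric $\mathrm{dist}(x,y)=\langle x-y\rangle$, where $\langle\tau\rangle=\min\{|\hat\tau-p|:p\in\mathbb{Z}\}$ for any representative $\hat\tau\in\mathbb{R}$ of $\tau$. $\mathbb{Z}_+=\{1,2,\ldots\}$. A sequence $\{\omega_n\}_{n\ge0}$ in a metric space $\Omega$ has the repetition property if for every $\varepsilon>0$ and $r \in \mathbb{Z}_+$ there exists $q \in \mathbb{Z}_+$ such that $\mathrm{dist}(\omega_n,\omega_{n+q}) < \varepsilon$ for $n = 0,1,\ldots, rq$. A family of sequences $\{\omega^{(\gamma)}_n\}_{n\ge0}$ in metric spaces $\Omega^{(\gamma)}$, $\gamma\in\Gamma$, has the joint repetition property if each of them has the repetition property and, for each finite subfamily and each $\varepsilon>0$, $r\in\mathbb{Z}_+$, a single $q\in\mathbb{Z}_+$ can be chosen that works simultaneously for all sequences in the subfamily. *)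

theory Defs
  imports Complex_Main
begin

text \<open>The circle T = R/Z is represented by real representatives; all notions below
  only depend on the classes modulo Z.  The norm is the distance to the nearest integer.\<close>

definition tnorm :: "real \<Rightarrow> real" where
  "tnorm t = Inf {\<bar>t - real_of_int p\<bar> | p. True}"

definition tdist :: "real \<Rightarrow> real \<Rightarrow> real" where
  "tdist x y = tnorm (x - y)"

definition rep_prop :: "('a \<Rightarrow> 'a \<Rightarrow> real) \<Rightarrow> (nat \<Rightarrow> 'a) \<Rightarrow> bool" where
  "rep_prop d w \<longleftrightarrow>
     (\<forall>\<epsilon>>0. \<forall>r::nat. r \<ge> 1 \<longrightarrow>
        (\<exists>q::nat. q \<ge> 1 \<and> (\<forall>n\<le>r*q. d (w n) (w (n+q)) < \<epsilon>)))"

definition joint_rep_prop :: "('a \<Rightarrow> 'a \<Rightarrow> real) \<Rightarrow> (nat \<Rightarrow> 'a) set \<Rightarrow> bool" where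
  "joint_rep_prop d S \<longleftrightarrow>
     (\<forall>w\<in>S. rep_prop d w) \<and>
     (\<forall>F. F \<subseteq> S \<longrightarrow> finite F \<longrightarrow>
        (\<forall>\<epsilon>>0. \<forall>r::nat. r \<ge> 1 \<longrightarrow>
          (\<exists>q::nat. q \<ge> 1 \<and> (\<forall>w\<in>F. \<forall>n\<le>r*q. d (w n) (w (n+q)) < \<epsilon>))))"

end

theory Submission
  imports Defs "HOL-Analysis.Kronecker_Approximation_Theorem"
begin

lemma tnorm_bdd: "bdd_below {\<bar>t - real_of_int p\<bar> | p. True}"
  by (rule bdd_belowI[of _ 0]) auto

lemma tnorm_le: "tnorm x \<le> \<bar>x - real_of_int p\<bar>"
  unfolding tnorm_def by (rule cInf_lower[OF _ tnorm_bdd]) auto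

lemma tnorm_lt: assumes "tnorm x < e" shows "\<exists>p. \<bar>x - real_of_int p\<bar> < e"
proof -
  have "{\<bar>x - real_of_int p\<bar> | p. True} \<noteq> {}" by auto
  from cInf_lessD[OF this] assms show ?thesis unfolding tnorm_def by auto
qed

lemma tnorm_triangle: "tnorm (x + y) \<le> tnorm x + tnorm y"
proof (rule field_le_epsilon)
  fix e :: real assume e: "0 < e"
  obtain p where p: "\<bar>x - real_of_int p\<bar> < tnorm x + e/2"
    using tnorm_lt[of x "tnorm x + e/2"] e by auto
  obtain q where q: "\<bar>y - real_of_int q\<bar> < tnorm y + e/2"
    using tnorm_lt[of y "tnorm y + e/2"] e by auto
  have "tnorm (x + y) \<le> \<bar>x + y - real_of_int (p + q)\<bar>" by (rule tnorm_le)
  also have "\<dots> \<le> \<bar>x - real_of_int p\<bar> + \<bar>y - real_of_int q\<bar>" by simp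
  finally show "tnorm (x + y) \<le> tnorm x + tnorm y + e" using p q by linarith
qed

lemma tnorm_zero: "tnorm 0 \<le> 0"
  using tnorm_le[of 0 0] by simp

lemma chain:
  fixes w :: "nat \<Rightarrow> real"
  shows "(\<forall>i<j. tnorm (w (n + i*q) - w (n + Suc i * q)) < e) \<Longrightarrow> tnorm (w n - w (n + j*q)) \<le> j * e"
proof (induction j)
  case 0 then show ?case using tnorm_zero by simp
next
  case (Suc j)
  have a: "tnorm (w n - w (n + j*q)) \<le> j * e" using Suc by auto
  have b: "tnorm (w (n + j*q) - w (n + Suc j * q)) < e" using Suc.prems by auto
  have "tnorm (w n - w (n + Suc j*q)) \<le> tnorm (w n - w (n + j*q)) + tnorm (w (n + j*q) - w (n + Suc j * q))"
    using tnorm_triangle[of "w n - w (n + j*q)" "w (n + j*q) - w (n + Suc j * q)"] by simp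
  then show ?case using a b by (simp add: algebra_simps)
qed

lemma core:
  fixes \<omega> :: "nat \<Rightarrow> real"
  assumes rp: "rep_prop tdist \<omega>" and e: "e > 0" and r: "r \<ge> (1::nat)"
  shows "\<exists>Q::nat. Q \<ge> 1 \<and> (\<forall>n\<le>r*Q. tnorm (\<omega> n - \<omega> (n+Q)) < e) \<and> tnorm (- (real Q * \<alpha>)) < e"
proof -
  define N :: nat where "N = nat (ceiling (1/e)) + 1"
  have N0: "N > 0" unfolding N_def by simp
  have "1/e < real N" unfolding N_def by linarith
  hence "1 < e * real N" using e by (simp add: field_simps)
  hence Ne: "1 / real N < e" using N0 by (simp add: field_simps)
  have e': "e / (2 * real N) > 0" using e N0 by simp
  have r': "(r+1)*N \<ge> 1" using N0 by simp
  obtain q :: nat where q1: "q \<ge> 1" and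
    hq: "\<forall>n\<le>((r+1)*N)*q. tdist (\<omega> n) (\<omega> (n+q)) < e / (2 * real N)"
    using rp[unfolded rep_prop_def, rule_format, OF e' r'] by blast
  have "\<exists>k p. 0 < k \<and> k \<le> int (N^1) \<and> (\<forall>i::nat<1. \<bar>of_int k * (real q * \<alpha>) - of_int (p i)\<bar> < 1/N)"
    apply (rule Dirichlet_approx_simult[where \<theta>="\<lambda>_. real q * \<alpha>" and n=1])
     apply (rule N0)
    apply (rule exI, rule exI, rule conjI, assumption, rule conjI, assumption)
    apply (intro allI impI)
    apply simp
    done
  then obtain k p where k0: "0 < k" and kN: "k \<le> int (N^1)"
    and kp: "\<forall>i::nat<1. \<bar>of_int k * (real q * \<alpha>) - of_int (p i)\<bar> < 1/N"
    by blast
  define K where "K = nat k"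
  have K1: "K \<ge> 1" and KN: "K \<le> N" using k0 kN unfolding K_def by auto
  have kK: "of_int k = real K" unfolding K_def using k0 by simp
  define Q where "Q = K * q"
  have Q1: "Q \<ge> 1" unfolding Q_def using K1 q1 by simp
  have A: "tnorm (- (real Q * \<alpha>)) < e"
  proof -
    have "tnorm (- (real Q * \<alpha>)) \<le> \<bar>- (real Q * \<alpha>) - real_of_int (- p 0)\<bar>" by (rule tnorm_le)
    also have "\<dots> = \<bar>of_int k * (real q * \<alpha>) - of_int (p 0)\<bar>"
      unfolding Q_def kK by (simp add: abs_minus_commute algebra_simps)
    also have "\<dots> < 1 / N" using kp by auto
    finally show ?thesis using Ne by linarith
  qed
  have B: "tnorm (\<omega> n - \<omega> (n+Q)) < e" if n: "n \<le> r*Q" for n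
  proof -
    have "\<forall>i<K. tnorm (\<omega> (n + i*q) - \<omega> (n + Suc i * q)) < e / (2 * real N)"
    proof (intro allI impI)
      fix i assume i: "i < K"
      have iq: "i*q \<le> K*q" using i by simp
      have "n + i*q \<le> r*K*q + K*q" using n iq add_mono[OF n iq] unfolding Q_def by (simp add: mult.assoc)
      also have "\<dots> = (r+1)*K*q" by (simp add: algebra_simps)
      also have "\<dots> \<le> ((r+1)*N)*q" using KN by (intro mult_le_mono1 mult_le_mono2)
      finally have "tdist (\<omega> (n + i*q)) (\<omega> (n + i*q + q)) < e / (2 * real N)" using hq by blast
      thus "tnorm (\<omega> (n + i*q) - \<omega> (n + Suc i * q)) < e / (2 * real N)"
        unfolding tdist_def by (simp add: algebra_simps)
    qed
    from chain[OF this] have "tnorm (\<omega> n - \<omega> (n + K*q)) \<le> K * (e / (2 * real N))" .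
    also have "\<dots> \<le> N * (e / (2 * real N))" using KN e by (intro mult_right_mono) auto
    also have "\<dots> = e/2" using N0 by simp
    finally show ?thesis unfolding Q_def using e by linarith
  qed
  show ?thesis using Q1 A B by blast
qed

lemma joint_intro:
  assumes "\<And>(e::real) r. e > 0 \<Longrightarrow> r \<ge> (1::nat) \<Longrightarrow> \<exists>q::nat. q \<ge> 1 \<and> (\<forall>w\<in>S. \<forall>n\<le>r*q. d (w n) (w (n+q)) < e)"
  shows "joint_rep_prop d S"
  unfolding joint_rep_prop_def rep_prop_def
proof (intro conjI ballI allI impI)
  fix w and e :: real and r :: nat assume "w \<in> S" "e > 0" "r \<ge> 1"
  then show "\<exists>q. 1 \<le> q \<and> (\<forall>n\<le>r * q. d (w n) (w (n + q)) < e)" using assms by blast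
next
  fix F and e :: real and r :: nat assume "F \<subseteq> S" "e > 0" "r \<ge> 1"
  then show "\<exists>q. 1 \<le> q \<and> (\<forall>w\<in>F. \<forall>n\<le>r * q. d (w n) (w (n + q)) < e)" using assms by blast
qed

theorem lemma3p2:
  fixes \<omega> :: "nat \<Rightarrow> real"
  assumes "rep_prop tdist \<omega>"
  shows "(\<forall>\<alpha>::real. joint_rep_prop tdist {\<omega>, (\<lambda>n. \<alpha> * real n)})
       \<and> (\<forall>\<alpha> \<beta> :: real. joint_rep_prop tdist {\<omega>, (\<lambda>n. \<omega> n + \<alpha> * real n + \<beta>)})"
proof (intro conjI allI)
  fix \<alpha> :: real
  show "joint_rep_prop tdist {\<omega>, (\<lambda>n. \<alpha> * real n)}"
  proof (rule joint_intro)
    fix e :: real and r :: nat assume "e > 0" "r \<ge> 1"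
    from core[OF assms this, of \<alpha>] obtain Q where
      Q: "Q \<ge> 1" "\<forall>n\<le>r*Q. tnorm (\<omega> n - \<omega> (n+Q)) < e" "tnorm (- (real Q * \<alpha>)) < e" by blast
    have "\<forall>n. tdist (\<alpha> * real n) (\<alpha> * real (n+Q)) < e"
      using Q(3) unfolding tdist_def by (simp add: algebra_simps)
    then show "\<exists>q::nat. q \<ge> 1 \<and> (\<forall>w\<in>{\<omega>, (\<lambda>n. \<alpha> * real n)}. \<forall>n\<le>r*q. tdist (w n) (w (n+q)) < e)"
      using Q unfolding tdist_def by auto
  qed
next
  fix \<alpha> \<beta> :: real
  show "joint_rep_prop tdist {\<omega>, (\<lambda>n. \<omega> n + \<alpha> * real n + \<beta>)}"
  proof (rule joint_intro)
    fix e :: real and r :: nat assume e: "e > 0" "r \<ge> 1"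
    hence "e/2 > 0" by simp
    from core[OF assms this e(2), of \<alpha>] obtain Q where
      Q: "Q \<ge> 1" "\<forall>n\<le>r*Q. tnorm (\<omega> n - \<omega> (n+Q)) < e/2" "tnorm (- (real Q * \<alpha>)) < e/2" by blast
    have "tdist (\<omega> n + \<alpha> * real n + \<beta>) (\<omega> (n+Q) + \<alpha> * real (n+Q) + \<beta>) < e" if n: "n \<le> r*Q" for n
    proof -
      have "tdist (\<omega> n + \<alpha> * real n + \<beta>) (\<omega> (n+Q) + \<alpha> * real (n+Q) + \<beta>)
          = tnorm ((\<omega> n - \<omega> (n+Q)) + (- (real Q * \<alpha>)))"
        unfolding tdist_def by (simp add: algebra_simps)
      also have "\<dots> \<le> tnorm (\<omega> n - \<omega> (n+Q)) + tnorm (- (real Q * \<alpha>))" by (rule tnorm_triangle)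
      moreover have "tnorm (\<omega> n - \<omega> (n+Q)) < e/2" using Q(2) n by blast
      ultimately show ?thesis using Q(3) by linarith
    qed
    moreover have "\<forall>n\<le>r*Q. tdist (\<omega> n) (\<omega> (n+Q)) < e" unfolding tdist_def
    proof (intro allI impI)
      fix n assume "n \<le> r*Q"
      hence "tnorm (\<omega> n - \<omega> (n+Q)) < e/2" using Q(2) by blast
      thus "tnorm (\<omega> n - \<omega> (n+Q)) < e" using e by linarith
    qed
    ultimately show "\<exists>q::nat. q \<ge> 1 \<and> (\<forall>w\<in>{\<omega>, (\<lambda>n. \<omega> n + \<alpha> * real n + \<beta>)}. \<forall>n\<le>r*q. tdist (w n) (w (n+q)) < e)"
      using Q(1) by auto
  qed
qed

end
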